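(* Let $S\subseteq\mathbb N^d$ be a good semigroup, $E\subsetneq S$ a proper good ideal, and $A=S\setminus E=\bigcup_{i=1}^NA_i$ its partition into levels. Suppose that for every $i=1,\dots,N-1$ and every $\boldsymbol\alpha\in A_i$ there exists $\boldsymbol\beta\in A_{i+1}$ with $\boldsymbol\beta\gg\boldsymbol\alpha$. Then $A$ is well-behaved.
   Context: Notation: on $\mathbb{Z}^d$, $\le$ componentwise, $\boldsymbol\alpha\ll\boldsymbol\beta$ (also written $\boldsymbol\beta\gg\boldsymbol\alpha$) means $\alpha_i<\beta_i$ for all $i$, $\boldsymbol\alpha\le\le\boldsymbol\beta$ means $\boldsymbol\alpha=\boldsymbol\beta$ or $\boldsymbol\alpha\ll\boldsymbol\beta$, $\wedge$ componentwise minimum, $I=\{1,\dots,d\}$. For $T\subseteq\mathbb Z^d$: $\Delta^T_F(\boldsymbol\alpha)=\{\boldsymbol\beta\in T:\beta_i=\alpha_i\ (i\in F),\ \beta_j>\alpha_j\ (j\notin F)\}$, $\widetilde\Delta^T_F(\boldsymbol\alpha)=\{\boldsymbol\beta\in T:\beta_i=\alpha_i\ (i\in F),\ \beta_j\ge\alpha_j\ (j\notin F)\}\setminus\{\boldsymbol\alpha\}$. A good semigroup is a submonoid $S$ of $(\mathbb{N}^d,+)$ closed under $\wedge$ (G1), satisfying (G2): if $\boldsymbol\alpha\neq\boldsymbol\beta\in S$ and $\alpha_i=\beta_i$, there is $\boldsymbol\epsilon\in S$ with $\epsilon_i>\alpha_i$, $\epsilon_j\ge\min\{\alpha_j,\beta_j\}$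 for $j\ne i$, with equality if $\alpha_j\ne\beta_j$; and (G3): $\boldsymbol c+\mathbb N^d\subseteq S$ for some $\boldsymbol c$. A good ideal is $E\subseteq S$ with $E+S\subseteq E$ satisfying (G1)–(G3). Complete infimum: $\boldsymbol\alpha\in B\subseteq S$ is a complete infimum of $\boldsymbol\beta^{(1)},\dots,\boldsymbol\beta^{(r)}\in B$ ($r\ge2$) if $\boldsymbol\beta^{(j)}\in\Delta^S_{F_j}(\boldsymbol\alpha)$ with $\emptyset\ne F_j\subsetneq I$, $\boldsymbol\beta^{(j)}\wedge\boldsymbol\beta^{(k)}=\boldsymbol\alpha$ ($j\ne k$), $\bigcap F_j=\emptyset$. Levels: $B^{(1)}$ = maximal elements of $A$ for $\le\le$, $C^{(1)}$ = those that are complete infima of $r$ elements of $B^{(1)}$ ($1<r\le d$), $D^{(1)}=B^{(1)}\setminus C^{(1)}$; inductively for $A\setminus\bigcup_{j<i}D^{(j)}$; $A=\bigsqcup_{i=1}^ND^{(i)}$, $A_i=D^{(N+1-i)}$. Well-behaved: $A$ is well-behaved if whenever $\boldsymbol\alpha\in S$ is a complete infimum (in $S$) of $\boldsymbol\beta^{(1)},\dots,\boldsymbol\beta^{(r)}$ with, for each $j$, $\boldsymbol\beta^{(j)}\in\widetilde\Delta^S_{G_j}(\boldsymbol\alpha)$ and $\widetilde\Delta^S_{G_j}(\boldsymbol\alpha)\subseteq A$, then $\boldsymbol\alpha\in E$. *)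

theory Defs
  imports Main
begin

text \<open>Points of N^d are functions from a finite index type 'i (with CARD('i) = d) to nat.
  The index set I is UNIV.\<close>

definition vle :: "('i \<Rightarrow> nat) \<Rightarrow> ('i \<Rightarrow> nat) \<Rightarrow> bool" where
  "vle a b \<longleftrightarrow> (\<forall>i. a i \<le> b i)"

definition vll :: "('i \<Rightarrow> nat) \<Rightarrow> ('i \<Rightarrow> nat) \<Rightarrow> bool" where
  "vll a b \<longleftrightarrow> (\<forall>i. a i < b i)"

definition vlele :: "('i \<Rightarrow> nat) \<Rightarrow> ('i \<Rightarrow> nat) \<Rightarrow> bool" where
  "vlele a b \<longleftrightarrow> a = b \<or> vll a b"

definition vmeet :: "('i \<Rightarrow> nat) \<Rightarrow> ('i \<Rightarrow> nat) \<Rightarrow> ('i \<Rightarrow> nat)" where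
  "vmeet a b = (\<lambda>i. min (a i) (b i))"

definition vadd :: "('i \<Rightarrow> nat) \<Rightarrow> ('i \<Rightarrow> nat) \<Rightarrow> ('i \<Rightarrow> nat)" where
  "vadd a b = (\<lambda>i. a i + b i)"

definition Delta :: "('i \<Rightarrow> nat) set \<Rightarrow> 'i set \<Rightarrow> ('i \<Rightarrow> nat) \<Rightarrow> ('i \<Rightarrow> nat) set" where
  "Delta T F a = {b \<in> T. (\<forall>i\<in>F. b i = a i) \<and> (\<forall>j. j \<notin> F \<longrightarrow> b j > a j)}"

definition Delta_tilde :: "('i \<Rightarrow> nat) set \<Rightarrow> 'i set \<Rightarrow> ('i \<Rightarrow> nat) \<Rightarrow> ('i \<Rightarrow> nat) set" where
  "Delta_tilde T F a = {b \<in> T. (\<forall>i\<in>F. b i = a i) \<and> (\<forall>j. j \<notin> F \<longrightarrow> b j \<ge> a j)} - {a}"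

definition G1 :: "('i \<Rightarrow> nat) set \<Rightarrow> bool" where
  "G1 T \<longleftrightarrow> (\<forall>a\<in>T. \<forall>b\<in>T. vmeet a b \<in> T)"

definition G2 :: "('i \<Rightarrow> nat) set \<Rightarrow> bool" where
  "G2 T \<longleftrightarrow> (\<forall>a\<in>T. \<forall>b\<in>T. \<forall>i. a \<noteq> b \<and> a i = b i \<longrightarrow>
     (\<exists>e\<in>T. e i > a i \<and>
        (\<forall>j. j \<noteq> i \<longrightarrow> e j \<ge> min (a j) (b j) \<and>
                         (a j \<noteq> b j \<longrightarrow> e j = min (a j) (b j)))))"

definition G3 :: "('i \<Rightarrow> nat) set \<Rightarrow> bool" where
  "G3 T \<longleftrightarrow> (\<exists>c. \<forall>x. vle c x \<longrightarrow> x \<in> T)"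

definition good_semigroup :: "('i \<Rightarrow> nat) set \<Rightarrow> bool" where
  "good_semigroup S \<longleftrightarrow> (\<lambda>_. 0) \<in> S \<and> (\<forall>a\<in>S. \<forall>b\<in>S. vadd a b \<in> S)
     \<and> G1 S \<and> G2 S \<and> G3 S"

definition good_ideal :: "('i \<Rightarrow> nat) set \<Rightarrow> ('i \<Rightarrow> nat) set \<Rightarrow> bool" where
  "good_ideal S E \<longleftrightarrow> E \<subseteq> S \<and> (\<forall>a\<in>E. \<forall>s\<in>S. vadd a s \<in> E)
     \<and> G1 E \<and> G2 E \<and> G3 E"

definition complete_inf ::
  "('i \<Rightarrow> nat) set \<Rightarrow> ('i \<Rightarrow> nat) set \<Rightarrow> ('i \<Rightarrow> nat) \<Rightarrow> nat \<Rightarrow> (nat \<Rightarrow> ('i \<Rightarrow> nat)) \<Rightarrow> bool" where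
  "complete_inf S B a r bs \<longleftrightarrow> a \<in> B \<and> r \<ge> 2 \<and> (\<forall>j<r. bs j \<in> B) \<and>
     (\<exists>F :: nat \<Rightarrow> 'i set.
        (\<forall>j<r. F j \<noteq> {} \<and> F j \<noteq> UNIV \<and> bs j \<in> Delta S (F j) a) \<and>
        (\<forall>j<r. \<forall>k<r. j \<noteq> k \<longrightarrow> vmeet (bs j) (bs k) = a) \<and>
        (\<Inter>j\<in>{..<r}. F j) = {})"

definition maxel :: "('i \<Rightarrow> nat) set \<Rightarrow> ('i \<Rightarrow> nat) set" where
  "maxel T = {a \<in> T. \<forall>b\<in>T. vlele a b \<longrightarrow> b = a}"

definition Cset :: "('i::finite \<Rightarrow> nat) set \<Rightarrow> ('i \<Rightarrow> nat) set \<Rightarrow> ('i \<Rightarrow> nat) set" where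
  "Cset S T = {a \<in> maxel T. \<exists>r bs. 1 < r \<and> r \<le> card (UNIV :: 'i set) \<and> complete_inf S (maxel T) a r bs}"

definition Dset :: "('i::finite \<Rightarrow> nat) set \<Rightarrow> ('i \<Rightarrow> nat) set \<Rightarrow> ('i \<Rightarrow> nat) set" where
  "Dset S T = maxel T - Cset S T"

fun rest :: "('i::finite \<Rightarrow> nat) set \<Rightarrow> ('i \<Rightarrow> nat) set \<Rightarrow> nat \<Rightarrow> ('i \<Rightarrow> nat) set" where
  "rest S A 0 = A"
| "rest S A (Suc k) = rest S A k - Dset S (rest S A k)"

text \<open>D^(i) for i \<ge> 1.\<close>
definition Dlevel :: "('i::finite \<Rightarrow> nat) set \<Rightarrow> ('i \<Rightarrow> nat) set \<Rightarrow> nat \<Rightarrow> ('i \<Rightarrow> nat) set" where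
  "Dlevel S A i = Dset S (rest S A (i - 1))"

definition Alevel :: "('i::finite \<Rightarrow> nat) set \<Rightarrow> ('i \<Rightarrow> nat) set \<Rightarrow> nat \<Rightarrow> nat \<Rightarrow> ('i \<Rightarrow> nat) set" where
  "Alevel S A N i = Dlevel S A (N + 1 - i)"

definition well_behaved :: "('i \<Rightarrow> nat) set \<Rightarrow> ('i \<Rightarrow> nat) set \<Rightarrow> ('i \<Rightarrow> nat) set \<Rightarrow> bool" where
  "well_behaved S E A \<longleftrightarrow> (\<forall>a r bs. a \<in> S \<and> complete_inf S S a r bs \<and>
      (\<forall>j<r. \<exists>G. bs j \<in> Delta_tilde S G a \<and> Delta_tilde S G a \<subseteq> A) \<longrightarrow> a \<in> E)"

end

theory Submission
  imports Defs
begin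


definition cinf :: "('i \<Rightarrow> nat) set \<Rightarrow> ('i \<Rightarrow> nat) \<Rightarrow> ('i \<Rightarrow> nat) set \<Rightarrow> bool" where
  "cinf S x M \<longleftrightarrow> (\<forall>m\<in>M. m \<in> S \<and> vle x m \<and> m \<noteq> x \<and> (\<exists>l. m l = x l)) \<and>
     (\<forall>m\<in>M. \<forall>m'\<in>M. m \<noteq> m' \<longrightarrow> vmeet m m' = x) \<and> (\<forall>l. \<exists>m\<in>M. m l \<noteq> x l)"

lemma cinf_shrink:
  assumes c: "cinf S x M"
    and f: "\<And>m. m \<in> M \<Longrightarrow> f m \<in> S \<and> vle x (f m) \<and> vle (f m) m \<and> (\<forall>l. x l < m l \<longrightarrow> x l < f m l)"
  shows "cinf S x (f ` M)"
proof -
  have c1: "\<And>m. m \<in> M \<Longrightarrow> m \<in> S \<and> vle x m \<and> m \<noteq> x \<and> (\<exists>l. m l = x l)"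
   and c2: "\<And>m m'. m \<in> M \<Longrightarrow> m' \<in> M \<Longrightarrow> m \<noteq> m' \<Longrightarrow> vmeet m m' = x"
   and c3: "\<And>l. \<exists>m\<in>M. m l \<noteq> x l" using c unfolding cinf_def by blast+
  have A: "f m \<in> S \<and> vle x (f m) \<and> f m \<noteq> x \<and> (\<exists>l. f m l = x l)" if "m \<in> M" for m
  proof -
    from c1[OF that] obtain l where l: "m l = x l" by blast
    from c1[OF that] have "\<exists>l. x l < m l" unfolding vle_def
      by (metis le_neq_implies_less ext)
    then obtain l' where "x l' < m l'" by blast
    with f[OF that] have "x l' < f m l'" by blast
    moreover from f[OF that] l have "f m l = x l" unfolding vle_def by (metis le_antisym)
    ultimately show ?thesis using f[OF that] by auto
  qed
  have B: "vmeet m1 m2 = x" if m12: "m1 \<in> f ` M" "m2 \<in> f ` M" "m1 \<noteq> m2" for m1 m2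
  proof -
    obtain n1 n2 where n: "n1 \<in> M" "n2 \<in> M" "m1 = f n1" "m2 = f n2" using m12 by blast
    then have "n1 \<noteq> n2" using m12 by blast
    then have e: "vmeet n1 n2 = x" using c2 n by blast
    show ?thesis
    proof
      fix l
      have "x l \<le> m1 l" "x l \<le> m2 l" "m1 l \<le> n1 l" "m2 l \<le> n2 l" using f n unfolding vle_def by auto
      moreover have "min (n1 l) (n2 l) = x l" using e unfolding vmeet_def by meson
      ultimately show "vmeet m1 m2 l = x l" unfolding vmeet_def by linarith
    qed
  qed
  have C: "\<exists>m\<in>f ` M. m l \<noteq> x l" for l
  proof -
    obtain m where m: "m \<in> M" "m l \<noteq> x l" using c3 by blast
    then have "x l < m l" using c1[OF m(1)] unfolding vle_def by (metis le_neq_implies_less)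
    then have "x l < f m l" using f[OF m(1)] by blast
    then show ?thesis using m by force
  qed
  show ?thesis unfolding cinf_def using A B C by blast
qed

lemma complete_inf_cinf:
  assumes "complete_inf S S a r bs"
  shows "cinf S a (bs ` {..<r})"
proof -
  obtain F where F: "\<forall>j<r. F j \<noteq> {} \<and> F j \<noteq> UNIV \<and> bs j \<in> Delta S (F j) a"
    "\<forall>j<r. \<forall>k<r. j \<noteq> k \<longrightarrow> vmeet (bs j) (bs k) = a" "(\<Inter>j\<in>{..<r}. F j) = {}"
    using assms unfolding complete_inf_def by blast
  have A: "bs j \<in> S \<and> vle a (bs j) \<and> bs j \<noteq> a \<and> (\<exists>l. bs j l = a l)" if jr: "j < r" for j
  proof -
    have d: "bs j \<in> S" "\<forall>i\<in>F j. bs j i = a i" "\<forall>i. i \<notin> F j \<longrightarrow> bs j i > a i"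
      using F(1) jr unfolding Delta_def by auto
    have "F j \<noteq> UNIV" "F j \<noteq> {}" using F(1) jr by auto
    then obtain i i' where ii: "i \<notin> F j" "i' \<in> F j" by blast
    then have "bs j \<noteq> a" using d by force
    then show ?thesis using ii using d unfolding vle_def by (metis less_imp_le_nat order_refl)
  qed
  have C: "\<exists>m\<in>bs ` {..<r}. m l \<noteq> a l" for l
  proof -
    obtain j where "j < r" "l \<notin> F j" using F(3) by blast
    then have "bs j l > a l" using F(1) unfolding Delta_def by auto
    then show ?thesis using \<open>j < r\<close> by force
  qed
  show ?thesis unfolding cinf_def using A C F(2) by fastforce
qed

lemma cinf_to_Cset:
  fixes x :: "'i::finite \<Rightarrow> nat"
  assumes c: "cinf S x M" and xm: "x \<in> maxel T" and Mm: "M \<subseteq> maxel T"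
  shows "x \<in> Cset S T"
proof -
  have c1: "\<And>m. m \<in> M \<Longrightarrow> m \<in> S \<and> vle x m \<and> m \<noteq> x \<and> (\<exists>l. m l = x l)"
   and c2: "\<And>m m'. m \<in> M \<Longrightarrow> m' \<in> M \<Longrightarrow> m \<noteq> m' \<Longrightarrow> vmeet m m' = x"
   and c3: "\<And>l. \<exists>m\<in>M. m l \<noteq> x l" using c unfolding cinf_def by blast+
  define g where "g l = (SOME m. m \<in> M \<and> m l \<noteq> x l)" for l
  have g: "g l \<in> M \<and> g l l \<noteq> x l" for l
    unfolding g_def using someI_ex[of "\<lambda>m. m \<in> M \<and> m l \<noteq> x l"] c3[of l] by blast
  define M' where "M' = range g"
  have fin: "finite M'" unfolding M'_def by simp
  have M'M: "M' \<subseteq> M" unfolding M'_def using g by blast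
  have cardle: "card M' \<le> card (UNIV :: 'i set)" unfolding M'_def by (rule card_image_le) simp
  have card2: "1 < card M'"
  proof (rule ccontr)
    assume "\<not> 1 < card M'"
    moreover have "M' \<noteq> {}" unfolding M'_def by simp
    moreover have "card M' \<noteq> 0" using fin \<open>M' \<noteq> {}\<close> by simp
    ultimately have "card M' = 1" by linarith
    then obtain m where m: "M' = {m}" using card_1_singletonE by blast
    then have "\<forall>l. g l = m" unfolding M'_def by (metis rangeI singletonD)
    then have "\<forall>l. m l \<noteq> x l" using g by metis
    moreover have "m \<in> M" using m M'M by blast
    ultimately show False using c1 by blast
  qed
  obtain h where h: "bij_betw h {0..<card M'} M'" using ex_bij_betw_nat_finite[OF fin] by blast
  define F where "F t = {l. h t l = x l}" for t
  have hM: "h t \<in> M" if "t < card M'" for t using h that M'M unfolding bij_betw_def by auto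
  have "complete_inf S (maxel T) x (card M') h"
    unfolding complete_inf_def
  proof (intro conjI allI impI exI[of _ F])
    show "x \<in> maxel T" by fact
    show "2 \<le> card M'" using card2 by simp
    fix j assume j: "j < card M'"
    show "h j \<in> maxel T" using hM[OF j] Mm by blast
    have m: "h j \<in> S \<and> vle x (h j) \<and> h j \<noteq> x \<and> (\<exists>l. h j l = x l)" using c1 hM[OF j] by blast
    show "F j \<noteq> {}" using m unfolding F_def by blast
    show "F j \<noteq> UNIV" using m unfolding F_def by fastforce
    show "h j \<in> Delta S (F j) x" using m unfolding Delta_def F_def vle_def
      by (auto simp: le_neq_implies_less)
  next
    fix j k assume jk: "j < card M'" "k < card M'" "j \<noteq> k"
    then have "h j \<noteq> h k" using h unfolding bij_betw_def inj_on_def by auto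
    then show "vmeet (h j) (h k) = x" using c2 hM jk by blast
  next
    show "(\<Inter>j\<in>{..<card M'}. F j) = {}"
    proof -
      have "l \<notin> (\<Inter>j\<in>{..<card M'}. F j)" for l
      proof -
        have "g l \<in> M'" unfolding M'_def by simp
        then obtain t where "t < card M'" "h t = g l" using h unfolding bij_betw_def by (metis atLeastLessThan_iff imageE)
        then show ?thesis using g[of l] unfolding F_def by (metis (mono_tags, lifting) INT_E lessThan_iff mem_Collect_eq)
      qed
      then show ?thesis by blast
    qed
  qed
  then show ?thesis unfolding Cset_def using xm card2 cardle by blast
qed



lemma fiber_step:
  assumes G2: "G2 S" and w: "w \<in> S" "y \<in> S" "vle w y" and nU: "\<exists>l. w l \<noteq> y l"
    and e: "e \<in> S" "vle w e" "\<forall>l. w l \<noteq> y l \<longrightarrow> e l = w l" and i: "w i = y i" "e i = w i"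
  shows "\<exists>\<epsilon>. \<epsilon> \<in> S \<and> vle w \<epsilon> \<and> (\<forall>l. w l \<noteq> y l \<longrightarrow> \<epsilon> l = w l) \<and> \<epsilon> i \<noteq> w i \<and> (\<forall>l. e l \<noteq> w l \<longrightarrow> \<epsilon> l = w l)"
proof -
  have ey: "e \<noteq> y" using nU e(3) by metis
  have "e i = y i" using i by simp
  then obtain \<epsilon> where ep: "\<epsilon> \<in> S" "\<epsilon> i > e i"
    "\<forall>j. j \<noteq> i \<longrightarrow> \<epsilon> j \<ge> min (e j) (y j) \<and> (e j \<noteq> y j \<longrightarrow> \<epsilon> j = min (e j) (y j))"
    using G2 e(1) w(2) ey unfolding G2_def by blast
  have we: "\<And>l. w l \<le> e l" "\<And>l. w l \<le> y l" using e(2) w(3) unfolding vle_def by auto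
  show ?thesis
  proof (intro exI[of _ \<epsilon>] conjI allI impI)
    show "\<epsilon> \<in> S" by fact
    show "vle w \<epsilon>" unfolding vle_def
    proof
      fix l show "w l \<le> \<epsilon> l"
        using ep we[of l] i by (cases "l = i") force+
    qed
    show "\<epsilon> i \<noteq> w i" using ep i by simp
  next
    fix l assume "w l \<noteq> y l"
    then have "l \<noteq> i" "e l = w l" "e l \<noteq> y l" using i e(3) by auto
    then show "\<epsilon> l = w l" using ep(3) we[of l] by auto
  next
    fix l assume "e l \<noteq> w l"
    then have "l \<noteq> i" using i by auto
    have "w l = y l" using e(3) \<open>e l \<noteq> w l\<close> by metis
    then have "e l \<noteq> y l" using \<open>e l \<noteq> w l\<close> by simp
    then show "\<epsilon> l = w l" using ep(3) \<open>l \<noteq> i\<close> we[of l] \<open>w l = y l\<close> by auto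
  qed
qed

lemma fiber_multi:
  assumes G1: "G1 S" and G2: "G2 S" and w: "w \<in> S" "y \<in> S" "vle w y" and nU: "\<exists>l. w l \<noteq> y l"
    and i: "w i = y i" and fin: "finite Es"
  shows "(\<forall>e\<in>Es. e \<in> S \<and> vle w e \<and> (\<forall>l. w l \<noteq> y l \<longrightarrow> e l = w l) \<and> e i = w i) \<Longrightarrow>
    \<exists>\<epsilon>. \<epsilon> \<in> S \<and> vle w \<epsilon> \<and> (\<forall>l. w l \<noteq> y l \<longrightarrow> \<epsilon> l = w l) \<and> \<epsilon> i \<noteq> w i \<and> (\<forall>e\<in>Es. \<forall>l. e l \<noteq> w l \<longrightarrow> \<epsilon> l = w l)"
  using fin
proof (induction Es rule: finite_induct)
  case empty
  have "vle w w" unfolding vle_def by simp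
  then show ?case using fiber_step[OF G2 w nU w(1) _ _ i] by auto
next
  case (insert e Es)
  obtain \<epsilon>1 where e1: "\<epsilon>1 \<in> S" "vle w \<epsilon>1" "\<forall>l. w l \<noteq> y l \<longrightarrow> \<epsilon>1 l = w l" "\<epsilon>1 i \<noteq> w i"
     "\<forall>e\<in>Es. \<forall>l. e l \<noteq> w l \<longrightarrow> \<epsilon>1 l = w l" using insert by auto
  have ee: "e \<in> S" "vle w e" "\<forall>l. w l \<noteq> y l \<longrightarrow> e l = w l" "e i = w i" using insert.prems by auto
  obtain \<epsilon>2 where e2: "\<epsilon>2 \<in> S" "vle w \<epsilon>2" "\<forall>l. w l \<noteq> y l \<longrightarrow> \<epsilon>2 l = w l" "\<epsilon>2 i \<noteq> w i"
     "\<forall>l. e l \<noteq> w l \<longrightarrow> \<epsilon>2 l = w l" using fiber_step[OF G2 w nU ee(1-3) i ee(4)] by blast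
  define \<epsilon> where "\<epsilon> = vmeet \<epsilon>1 \<epsilon>2"
  have "\<epsilon> \<in> S" using G1 e1(1) e2(1) unfolding G1_def \<epsilon>_def by blast
  moreover have "vle w \<epsilon>" using e1(2) e2(2) unfolding vle_def \<epsilon>_def vmeet_def by auto
  moreover have "\<forall>l. w l \<noteq> y l \<longrightarrow> \<epsilon> l = w l" using e1(3) unfolding \<epsilon>_def vmeet_def
    using e2(3) by auto
  moreover have "\<epsilon> i \<noteq> w i" using e1(2,4) e2(2,4) unfolding \<epsilon>_def vmeet_def vle_def
    by (metis min_def)
  moreover have "\<forall>e'\<in>insert e Es. \<forall>l. e' l \<noteq> w l \<longrightarrow> \<epsilon> l = w l"
  proof (intro ballI allI impI)
    fix e' l assume "e' \<in> insert e Es" "e' l \<noteq> w l"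
    then have "\<epsilon>1 l = w l \<or> \<epsilon>2 l = w l" using e1(5) e2(5) by auto
    moreover have "w l \<le> \<epsilon>1 l" "w l \<le> \<epsilon>2 l" using e1(2) e2(2) unfolding vle_def by auto
    ultimately show "\<epsilon> l = w l" unfolding \<epsilon>_def vmeet_def by (auto simp: min_def)
  qed
  ultimately show ?case by blast
qed

lemma fiber_greedy:
  fixes w y :: "'i::finite \<Rightarrow> nat"
  assumes G1: "G1 S" and G2: "G2 S" and w: "w \<in> S" "y \<in> S" "vle w y" and nU: "\<exists>l. w l \<noteq> y l"
    and Sp_def: "Sp = {e. e \<in> S \<and> vle w e \<and> (\<forall>l. w l \<noteq> y l \<longrightarrow> e l = w l)}"
    and P_def: "P = (\<lambda>e. {l. e l \<noteq> w l})" and H_def: "H = {l. w l = y l}"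
  shows "finite Es \<Longrightarrow> Es \<subseteq> Sp \<Longrightarrow> (\<forall>e\<in>Es. P e \<noteq> {}) \<Longrightarrow>
     (\<forall>e\<in>Es. \<forall>e'\<in>Es. e \<noteq> e' \<longrightarrow> P e \<inter> P e' = {}) \<Longrightarrow>
     \<exists>Es'. finite Es' \<and> Es' \<subseteq> Sp \<and> (\<forall>e\<in>Es'. P e \<noteq> {}) \<and>
     (\<forall>e\<in>Es'. \<forall>e'\<in>Es'. e \<noteq> e' \<longrightarrow> P e \<inter> P e' = {}) \<and> H \<subseteq> \<Union>(P ` Es')"
proof (induction "card (H - \<Union>(P ` Es))" arbitrary: Es rule: less_induct)
  case less
  show ?case
  proof (cases "H \<subseteq> \<Union>(P ` Es)")
    case True
    then show ?thesis using less.prems by blast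
  next
    case False
    then obtain i where iH: "i \<in> H" "i \<notin> \<Union>(P ` Es)" by blast
    have "\<forall>e\<in>Es. e \<in> S \<and> vle w e \<and> (\<forall>l. w l \<noteq> y l \<longrightarrow> e l = w l) \<and> e i = w i"
      using less.prems(2) iH(2) unfolding Sp_def P_def by auto
    then obtain \<epsilon> where ep: "\<epsilon> \<in> S" "vle w \<epsilon>" "\<forall>l. w l \<noteq> y l \<longrightarrow> \<epsilon> l = w l" "\<epsilon> i \<noteq> w i"
      "\<forall>e\<in>Es. \<forall>l. e l \<noteq> w l \<longrightarrow> \<epsilon> l = w l"
      using fiber_multi[OF G1 G2 w nU _ less.prems(1)] iH(1) unfolding H_def by blast
    define Es1 where "Es1 = insert \<epsilon> Es"
    have epS: "\<epsilon> \<in> Sp" using ep unfolding Sp_def by blast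
    have iP: "i \<in> P \<epsilon>" using ep(4) unfolding P_def by simp
    have notin: "\<epsilon> \<notin> Es" using iH(2) iP by blast
    have disj: "P \<epsilon> \<inter> P e = {}" "P e \<inter> P \<epsilon> = {}" if "e \<in> Es" for e using ep(5) that unfolding P_def by auto
    have PH: "P \<epsilon> \<subseteq> H" using ep(3) unfolding P_def H_def by auto
    have lt: "card (H - \<Union>(P ` Es1)) < card (H - \<Union>(P ` Es))"
    proof (rule psubset_card_mono)
      show "finite (H - \<Union>(P ` Es))" by simp
      have "i \<in> H - \<Union>(P ` Es)" using iH by blast
      moreover have "i \<notin> H - \<Union>(P ` Es1)" unfolding Es1_def using iP by blast
      moreover have "H - \<Union>(P ` Es1) \<subseteq> H - \<Union>(P ` Es)" unfolding Es1_def by blast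
      ultimately show "H - \<Union>(P ` Es1) \<subset> H - \<Union>(P ` Es)" by blast
    qed
    have f1: "finite Es1" unfolding Es1_def using less.prems(1) by simp
    have f2: "Es1 \<subseteq> Sp" unfolding Es1_def using less.prems(2) epS by simp
    have f3: "\<forall>e\<in>Es1. P e \<noteq> {}" unfolding Es1_def using less.prems(3) iP by auto
    have f4: "\<forall>e\<in>Es1. \<forall>e'\<in>Es1. e \<noteq> e' \<longrightarrow> P e \<inter> P e' = {}"
    proof (intro ballI impI)
      fix e e' assume ee: "e \<in> Es1" "e' \<in> Es1" "e \<noteq> e'"
      show "P e \<inter> P e' = {}"
      proof (cases "e = \<epsilon>")
        case True
        then have "e' \<in> Es" using ee unfolding Es1_def by auto
        then show ?thesis using disj(1) True by simp
      next
        case False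
        then have eEs: "e \<in> Es" using ee unfolding Es1_def by auto
        show ?thesis
        proof (cases "e' = \<epsilon>")
          case True then show ?thesis using disj(2)[OF eEs] by simp
        next
          case False
          then have "e' \<in> Es" using ee unfolding Es1_def by auto
          then show ?thesis using less.prems(4) eEs ee(3) by blast
        qed
      qed
    qed
    show ?thesis using less.hyps[OF lt f1 f2 f3 f4] .
  qed
qed

lemma fiber_cinf:
  fixes w y :: "'i::finite \<Rightarrow> nat"
  assumes G1: "G1 S" and G2: "G2 S" and w: "w \<in> S" "y \<in> S" "vle w y"
    and nU: "\<exists>l. w l \<noteq> y l" and nE: "\<exists>l. w l = y l"
  shows "\<exists>Es. cinf S w (insert y Es) \<and> (\<forall>e\<in>Es. e \<in> S \<and> vle w e \<and> (\<forall>l. w l \<noteq> y l \<longrightarrow> e l = w l))"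
proof -
  define Sp where "Sp = {e. e \<in> S \<and> vle w e \<and> (\<forall>l. w l \<noteq> y l \<longrightarrow> e l = w l)}"
  define P where "P = (\<lambda>e::'i\<Rightarrow>nat. {l. e l \<noteq> w l})"
  define H where "H = {l. w l = y l}"
  have "\<exists>Es'. finite Es' \<and> Es' \<subseteq> Sp \<and> (\<forall>e\<in>Es'. P e \<noteq> {}) \<and>
     (\<forall>e\<in>Es'. \<forall>e'\<in>Es'. e \<noteq> e' \<longrightarrow> P e \<inter> P e' = {}) \<and> H \<subseteq> \<Union>(P ` Es')"
    by (rule fiber_greedy[OF G1 G2 w nU Sp_def P_def H_def, of "{}"]) auto
  then obtain Es where Es: "finite Es" "Es \<subseteq> Sp" "\<forall>e\<in>Es. P e \<noteq> {}"
     "\<forall>e\<in>Es. \<forall>e'\<in>Es. e \<noteq> e' \<longrightarrow> P e \<inter> P e' = {}" "H \<subseteq> \<Union>(P ` Es)"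
    by blast
  obtain l0 where l0: "w l0 \<noteq> y l0" using nU by blast
  have yne: "y \<noteq> e" if "e \<in> Es" for e using Es(2) that l0 unfolding Sp_def by auto
  have wl: "\<And>l. w l \<le> y l" using w(3) unfolding vle_def by auto
  have c1: "\<forall>m\<in>insert y Es. m \<in> S \<and> vle w m \<and> m \<noteq> w \<and> (\<exists>l. m l = w l)"
  proof
    fix m assume m: "m \<in> insert y Es"
    show "m \<in> S \<and> vle w m \<and> m \<noteq> w \<and> (\<exists>l. m l = w l)"
    proof (cases "m = y")
      case True
      have "y \<noteq> w" using nU by metis
      moreover have "\<exists>l. y l = w l" using nE by metis
      ultimately show ?thesis using True w by auto
    next
      case False
      then have "m \<in> Es" using m by simp
      then show ?thesis using Es(2,3) l0 unfolding Sp_def P_def by fastforce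
    qed
  qed
  have c2: "vmeet m m' = w" if mm: "m \<in> insert y Es" "m' \<in> insert y Es" "m \<noteq> m'" for m m'
  proof
    fix l
    have mw: "w l \<le> m l" "w l \<le> m' l" using c1 mm unfolding vle_def by auto
    have "m l = w l \<or> m' l = w l"
    proof (cases "m = y")
      case True
      then have "m' \<in> Es" using mm by auto
      then have "\<forall>l. w l \<noteq> y l \<longrightarrow> m' l = w l" using Es(2) unfolding Sp_def by blast
      then show ?thesis using True by metis
    next
      case F1: False
      then have mE: "m \<in> Es" using mm by auto
      show ?thesis
      proof (cases "m' = y")
        case True then show ?thesis using mE Es(2) unfolding Sp_def by auto
      next
        case False
        then have "m' \<in> Es" using mm by auto
        then have "P m \<inter> P m' = {}" using Es(4) mE mm(3) by blast
        then show ?thesis unfolding P_def by auto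
      qed
    qed
    then show "vmeet m m' l = w l" using mw unfolding vmeet_def by auto
  qed
  have c3: "\<exists>m\<in>insert y Es. m l \<noteq> w l" for l
  proof (cases "l \<in> H")
    case True
    then obtain e where "e \<in> Es" "l \<in> P e" using Es(5) by blast
    then show ?thesis unfolding P_def by auto
  next
    case False then show ?thesis unfolding H_def by auto
  qed
  have cc: "cinf S w (insert y Es)" unfolding cinf_def
    using c1 c2 c3 by (intro conjI ballI impI allI) auto
  have ee: "\<forall>e\<in>Es. e \<in> S \<and> vle w e \<and> (\<forall>l. w l \<noteq> y l \<longrightarrow> e l = w l)"
    using Es(2) unfolding Sp_def by blast
  show ?thesis using cc ee by blast
qed



lemma rest_sub: "rest S A k \<subseteq> A"
  by (induction k) auto

lemma rest_anti: "m \<le> k \<Longrightarrow> rest S A k \<subseteq> rest S A m"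
  by (rule lift_Suc_antimono_le[of "rest S A"]) auto

lemma D_maxel: "Dlevel S A k \<subseteq> maxel (rest S A (k-1))"
  unfolding Dlevel_def Dset_def by blast

lemma maxel_sub: "maxel T \<subseteq> T" unfolding maxel_def by blast

lemma D_rest: "Dlevel S A k \<subseteq> rest S A (k-1)"
  using D_maxel maxel_sub by blast

lemma D_A: "Dlevel S A k \<subseteq> A"
  using D_rest rest_sub by blast

lemma D_notrest: "1 \<le> k \<Longrightarrow> x \<in> Dlevel S A k \<Longrightarrow> x \<notin> rest S A k"
proof -
  assume "1 \<le> k" "x \<in> Dlevel S A k"
  then obtain k' where k: "k = Suc k'" by (cases k) auto
  show "x \<notin> rest S A k" using \<open>x \<in> Dlevel S A k\<close> unfolding k Dlevel_def by simp
qed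

lemma D_unique:
  assumes "1 \<le> k" "1 \<le> m" "x \<in> Dlevel S A k" "x \<in> Dlevel S A m"
  shows "k = m"
proof (rule ccontr)
  assume "k \<noteq> m"
  then consider "k < m" | "m < k" by linarith
  then show False
  proof cases
    case 1
    then have "x \<in> rest S A k" using assms D_rest rest_anti[of k "m-1" S A] by fastforce
    then show False using D_notrest assms by blast
  next
    case 2
    then have "x \<in> rest S A m" using assms D_rest rest_anti[of m "k-1" S A] by fastforce
    then show False using D_notrest assms by blast
  qed
qed

lemma maxel_no_vll: "x \<in> maxel T \<Longrightarrow> z \<in> T \<Longrightarrow> vll x z \<Longrightarrow> False"
  unfolding maxel_def vlele_def vll_def by auto

lemma vle_vll_trans: "vle x z \<Longrightarrow> vll z y \<Longrightarrow> vll x y"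
  unfolding vle_def vll_def using le_less_trans by blast

lemma vll_trans: "vll x z \<Longrightarrow> vll z y \<Longrightarrow> vll x y"
  unfolding vll_def using less_trans by blast

locale levels =
  fixes S :: "('i::finite \<Rightarrow> nat) set" and A :: "('i \<Rightarrow> nat) set" and N :: nat
  assumes AS: "A \<subseteq> S"
    and cover: "\<And>z. z \<in> A \<Longrightarrow> \<exists>k. 1 \<le> k \<and> k \<le> N \<and> z \<in> Dlevel S A k"
    and hyp: "\<And>k x. 2 \<le> k \<Longrightarrow> k \<le> N \<Longrightarrow> x \<in> Dlevel S A k \<Longrightarrow> \<exists>y\<in>Dlevel S A (k-1). vll x y"
begin

abbreviation "D \<equiv> Dlevel S A"

lemma chain: "1 \<le> k \<Longrightarrow> k < m \<Longrightarrow> m \<le> N \<Longrightarrow> x \<in> D m \<Longrightarrow> \<exists>y\<in>D k. vll x y"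
proof (induction m arbitrary: x rule: less_induct)
  case (less m)
  obtain y1 where y1: "y1 \<in> D (m-1)" "vll x y1" using hyp[of m x] less.prems by auto
  show ?case
  proof (cases "k = m - 1")
    case True then show ?thesis using y1 by blast
  next
    case False
    have "k < m-1" "m-1 < m" "m-1 \<le> N" using False less.prems by auto
    then obtain y where "y \<in> D k" "vll y1 y" using less.IH[of "m-1" y1] less.prems(1) y1(1) by blast
    then show ?thesis using y1 vll_trans by blast
  qed
qed

lemma level_mono:
  assumes "1 \<le> k" "k \<le> N" "1 \<le> m" "m \<le> N" "x \<in> D k" "z \<in> D m" "vle x z"
  shows "m \<le> k"
proof (rule ccontr)
  assume "\<not> m \<le> k"
  then obtain y where y: "y \<in> D k" "vll z y" using chain[of k m z] assms by auto
  then have "vll x y" using assms vle_vll_trans by blast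
  moreover have "x \<in> maxel (rest S A (k-1))" using assms D_maxel by blast
  moreover have "y \<in> rest S A (k-1)" using y D_rest by blast
  ultimately show False using maxel_no_vll by blast
qed

lemma level_strict:
  assumes "x \<in> D k" "z \<in> D k" "vll x z"
  shows False
  using assms D_maxel D_rest maxel_no_vll by blast

lemma main:
  assumes G1: "G1 S" and G2: "G2 S"
    and tA: "\<And>j. j < r \<Longrightarrow> Delta_tilde S (G j) a \<subseteq> A"
  defines "good \<equiv> \<lambda>m. m \<in> S \<and> vle a m \<and> m \<noteq> a \<and> (\<exists>j<r. \<forall>l\<in>G j. m l = a l)"
  shows "1 \<le> k \<Longrightarrow> k \<le> N \<Longrightarrow> x \<in> D k \<Longrightarrow> vle a x \<Longrightarrow> cinf S x M \<Longrightarrow>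
     (\<forall>m\<in>M. m \<in> D k \<or> good m) \<Longrightarrow> False"
proof (induction k arbitrary: x M rule: less_induct)
  case (less k)
  have goodA: "m \<in> A" if gm: "good m" for m
  proof -
    obtain j where j: "j < r" "\<forall>l\<in>G j. m l = a l" "m \<in> S" "vle a m" "m \<noteq> a"
      using gm unfolding good_def by blast
    then have "m \<in> Delta_tilde S (G j) a" unfolding Delta_tilde_def vle_def by auto
    then show ?thesis using tA j(1) by blast
  qed
  have xmax: "x \<in> maxel (rest S A (k-1))" using less.prems D_maxel by blast
  have noC: False if c0: "cinf S x M0" "M0 \<subseteq> D k" for M0
  proof -
    have "x \<in> Cset S (rest S A (k-1))"
      using cinf_to_Cset[OF c0(1) xmax] c0(2) D_maxel by blast
    then show False using less.prems(3) unfolding Dlevel_def Dset_def by blast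
  qed
  have c1: "\<And>m. m \<in> M \<Longrightarrow> m \<in> S \<and> vle x m \<and> m \<noteq> x \<and> (\<exists>l. m l = x l)"
    using less.prems(5) unfolding cinf_def by blast
  obtain c where c: "c \<in> M" "c \<notin> D k" using noC less.prems(5) by blast
  have gc: "good c" using c less.prems(6) by blast
  obtain mc where mc: "1 \<le> mc" "mc \<le> N" "c \<in> D mc" using cover goodA[OF gc] by blast
  have "mc \<le> k" using level_mono[OF less.prems(1,2) mc(1,2) less.prems(3) mc(3)] c1[OF c(1)] by blast
  moreover have "mc \<noteq> k" using mc c by blast
  ultimately have k2: "2 \<le> k" using mc by linarith
  obtain y where y: "y \<in> D (k-1)" "vll x y" using hyp[OF k2 less.prems(2,3)] by blast
  have yS: "y \<in> S" using y D_A AS by blast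
  have ax: "\<And>l. a l \<le> x l" using less.prems(4) unfolding vle_def by blast
  have xy: "\<And>l. x l < y l" using y unfolding vll_def by blast
  show False
  proof (cases "\<exists>c\<in>M. c \<notin> D k \<and> vmeet y c \<notin> D k")
    case True
    then obtain c where c: "c \<in> M" "c \<notin> D k" "vmeet y c \<notin> D k" by blast
    have gc: "good c" using c less.prems(6) by blast
    then obtain j where j: "j < r" "\<forall>l\<in>G j. c l = a l" unfolding good_def by blast
    define \<delta> where "\<delta> = vmeet y c"
    have cS: "c \<in> S" "vle x c" "c \<noteq> x" "\<exists>l. c l = x l" using c1[OF c(1)] by auto
    have dS: "\<delta> \<in> S" using G1 yS cS(1) unfolding G1_def \<delta>_def by blast
    have xd: "vle x \<delta>" using cS(2) xy unfolding vle_def \<delta>_def vmeet_def by (simp add: less_imp_le)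
    have ad: "vle a \<delta>" using xd ax unfolding vle_def using le_trans by blast
    have dG: "\<forall>l\<in>G j. \<delta> l = a l" using j(2) xy ax unfolding \<delta>_def vmeet_def
      by (metis le_less_trans min.strict_order_iff min_def)
    obtain l1 where l1: "x l1 < c l1" using cS(2,3) unfolding vle_def
      by (metis ext le_neq_implies_less)
    have dl1: "x l1 < \<delta> l1" using l1 xy unfolding \<delta>_def vmeet_def by simp
    have dna: "\<delta> \<noteq> a" using dl1 ax[of l1] by auto
    have gd: "good \<delta>" unfolding good_def using dS ad dna j(1) dG by blast
    obtain p where p: "1 \<le> p" "p \<le> N" "\<delta> \<in> D p" using cover goodA[OF gd] by blast
    have "p \<le> k" using level_mono[OF less.prems(1,2) p(1,2) less.prems(3) p(3) xd] .
    moreover have "k - 1 \<le> p"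
      using level_mono[OF p(1,2) _ _ p(3) y(1)] k2 less.prems(2)
      unfolding \<delta>_def vle_def vmeet_def by auto
    moreover have "p \<noteq> k" using p c(3) unfolding \<delta>_def by blast
    ultimately have pk: "p = k - 1" by linarith
    have dy: "vle \<delta> y" unfolding \<delta>_def vle_def vmeet_def by simp
    have nU: "\<exists>l. \<delta> l \<noteq> y l"
    proof -
      obtain l where "c l = x l" using cS(4) by blast
      then have "\<delta> l = x l" using xy[of l] unfolding \<delta>_def vmeet_def by simp
      then have "\<delta> l \<noteq> y l" using xy[of l] by simp
      then show ?thesis by blast
    qed
    have nE: "\<exists>l. \<delta> l = y l"
    proof (rule ccontr)
      assume "\<not> (\<exists>l. \<delta> l = y l)"
      then have "vll \<delta> y" using dy unfolding vle_def vll_def by (metis le_neq_implies_less)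
      then show False using level_strict p(3) y(1) pk by blast
    qed
    obtain Es where Es: "cinf S \<delta> (insert y Es)"
      "\<forall>e\<in>Es. e \<in> S \<and> vle \<delta> e \<and> (\<forall>l. \<delta> l \<noteq> y l \<longrightarrow> e l = \<delta> l)"
      using fiber_cinf[OF G1 G2 dS yS dy nU nE] by blast
    have "good e" if "e \<in> Es" for e
    proof -
      have e: "e \<in> S" "vle \<delta> e" "\<forall>l. \<delta> l \<noteq> y l \<longrightarrow> e l = \<delta> l" using Es(2) that by auto
      have ae: "vle a e" using e(2) ad unfolding vle_def using le_trans by blast
      have eG: "\<forall>l\<in>G j. e l = a l"
      proof
        fix l assume "l \<in> G j"
        then have "\<delta> l = a l" using dG by blast
        moreover then have "\<delta> l \<noteq> y l" using ax[of l] xy[of l] by simp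
        ultimately show "e l = a l" using e(3) by metis
      qed
      have "e \<noteq> a"
      proof
        assume "e = a"
        then have "\<delta> = a" using e(2) ad unfolding vle_def by (metis ext le_antisym)
        then show False using dna by blast
      qed
      then show ?thesis unfolding good_def using e(1) ae eG j(1) by blast
    qed
    then have "\<forall>m\<in>insert y Es. m \<in> D (k-1) \<or> good m" using y(1) by blast
    moreover have "k - 1 < k" "1 \<le> k - 1" "k - 1 \<le> N" using k2 less.prems(2) by auto
    ultimately show False using less.IH[of "k-1" \<delta> "insert y Es"] Es(1) p(3) pk ad by blast
  next
    case False
    define f where "f m = (if m \<in> D k then m else vmeet y m)" for m
    have "cinf S x (f ` M)"
    proof (rule cinf_shrink[OF less.prems(5)])
      fix m assume m: "m \<in> M"
      show "f m \<in> S \<and> vle x (f m) \<and> vle (f m) m \<and> (\<forall>l. x l < m l \<longrightarrow> x l < f m l)"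
      proof (cases "m \<in> D k")
        case True then show ?thesis using c1[OF m] unfolding f_def vle_def by auto
      next
        case False
        have "vmeet y m \<in> S" using G1 yS c1[OF m] unfolding G1_def by blast
        then show ?thesis using False c1[OF m] xy unfolding f_def vle_def vmeet_def
          by (auto simp: less_imp_le)
      qed
    qed
    moreover have "f ` M \<subseteq> D k" using False unfolding f_def by auto
    ultimately show False using noC by blast
  qed
qed

end



theorem proposition5p3:
  fixes S E :: "('i::finite \<Rightarrow> nat) set" and N :: nat
  assumes "good_semigroup S"
    and "good_ideal S E"
    and "E \<noteq> S"
    and "S - E = (\<Union>i\<in>{1..N}. Alevel S (S - E) N i)"
    and "\<forall>i\<in>{1..N-1}. \<forall>a\<in>Alevel S (S - E) N i. \<exists>b\<in>Alevel S (S - E) N (i+1). vll a b"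
  shows "well_behaved S E (S - E)"
proof -
  define A where "A = S - E"
  have G1: "G1 S" and G2: "G2 S" using assms(1) unfolding good_semigroup_def by auto
  have lv: "levels S A N"
  proof
    show "A \<subseteq> S" unfolding A_def by blast
  next
    fix z assume "z \<in> A"
    then obtain i where i: "i \<in> {1..N}" "z \<in> Alevel S A N i" using assms(4) unfolding A_def by blast
    then show "\<exists>k. 1 \<le> k \<and> k \<le> N \<and> z \<in> Dlevel S A k"
      unfolding Alevel_def by (intro exI[of _ "N + 1 - i"]) auto
  next
    fix k x assume k: "2 \<le> k" "k \<le> N" and x: "x \<in> Dlevel S A k"
    define i where "i = N + 1 - k"
    have i: "i \<in> {1..N-1}" "N + 1 - i = k" "N + 1 - (i + 1) = k - 1" using k unfolding i_def by auto
    have "x \<in> Alevel S A N i" unfolding Alevel_def i(2) using x .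
    then obtain b where "b \<in> Alevel S A N (i+1)" "vll x b" using assms(5) i(1) unfolding A_def by blast
    then show "\<exists>y\<in>Dlevel S A (k - 1). vll x y" unfolding Alevel_def i(3) by blast
  qed
  show ?thesis unfolding well_behaved_def
  proof (intro allI impI)
    fix a r bs
    assume h: "a \<in> S \<and> complete_inf S S a r bs \<and>
       (\<forall>j<r. \<exists>G. bs j \<in> Delta_tilde S G a \<and> Delta_tilde S G a \<subseteq> S - E)"
    have "\<forall>j. \<exists>G. j < r \<longrightarrow> bs j \<in> Delta_tilde S G a \<and> Delta_tilde S G a \<subseteq> A"
      using h unfolding A_def by blast
    then obtain G where G: "\<And>j. j < r \<Longrightarrow> bs j \<in> Delta_tilde S (G j) a \<and> Delta_tilde S (G j) a \<subseteq> A"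
      by metis
    show "a \<in> E"
    proof (rule ccontr)
      assume "a \<notin> E"
      then have aA: "a \<in> A" using h unfolding A_def by blast
      obtain k where k: "1 \<le> k" "k \<le> N" "a \<in> Dlevel S A k" using levels.cover[OF lv aA] by blast
      have c: "cinf S a (bs ` {..<r})" using complete_inf_cinf h by blast
      have aa: "vle a a" unfolding vle_def by simp
      have "\<forall>m\<in>bs ` {..<r}. m \<in> Dlevel S A k \<or>
         (m \<in> S \<and> vle a m \<and> m \<noteq> a \<and> (\<exists>j<r. \<forall>l\<in>G j. m l = a l))"
      proof
        fix m assume "m \<in> bs ` {..<r}"
        then obtain j where j: "j < r" "m = bs j" by blast
        then have "m \<in> Delta_tilde S (G j) a" using G by blast
        then show "m \<in> Dlevel S A k \<or> (m \<in> S \<and> vle a m \<and> m \<noteq> a \<and> (\<exists>j<r. \<forall>l\<in>G j. m l = a l))"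
          using j(1) unfolding Delta_tilde_def vle_def by (auto, metis order_refl)
      qed
      then show False
        using levels.main[OF lv G1 G2, of r G a, OF _ k(1,2,3) aa c] G by blast
    qed
  qed
qed

end
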